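(* Lattices $U+A_2+D_4+E_8$, $U+A_2+2D_4$, and $U+E_6(2)$ are achiral.
   Context: $U$ hyperbolic plane, $A_n,D_n,E_n$ positive definite root lattices, $(2)$ multiplies the form by 2, $+$ orthogonal sum. For an even hyperbolic lattice $\mathbb L$ with $\operatorname{discr}_3\mathbb L=\mathbb Z/3$ and $\operatorname{discr}_2$ of period 2: $W$ is generated by reflections in 2-roots ($v^2=2$) and 6-roots ($v^2=6$, $v\cdot\mathbb L\subset3\mathbb Z$); cells $P$ are fundamental chambers of $W$ in the hyperbolic space, each lifting to $\pm P^\#$ in the double cover. An automorphism is $P$-direct if it preserves $P^\#$, $\mathbb Z/3$-reversing if it acts as $-\operatorname{id}$ on $\operatorname{discr}_3\mathbb L$. $\mathbb L$ is achiral if it admits an automorphism that is $\mathbb Z/3$-reversing and $P$-direct for some cell $P$. *)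

theory Defs
  imports "HOL-Analysis.Analysis"
begin

text \<open>A lattice of rank n is Z^n with a bilinear form given by an integer Gram matrix,
  represented as a list of n rows (type int list list). Vectors of the ambient real space
  R^n are functions nat \<Rightarrow> real vanishing at indices \<ge> n (with the product topology,
  which on this subspace is the Euclidean topology).\<close>

definition gram :: "int list list \<Rightarrow> nat \<Rightarrow> nat \<Rightarrow> int" where
  "gram M i j = (if i < length M \<and> j < length (M ! i) then M ! i ! j else 0)"

definition rk :: "int list list \<Rightarrow> nat" where
  "rk M = length M"

definition Vsp :: "nat \<Rightarrow> (nat \<Rightarrow> real) set" where
  "Vsp n = {x. \<forall>i\<ge>n. x i = 0}"

definition lat :: "nat \<Rightarrow> (nat \<Rightarrow> real) set" where
  "lat n = {x \<in> Vsp n. \<forall>i<n. x i \<in> \<int>}"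

definition bil :: "int list list \<Rightarrow> (nat \<Rightarrow> real) \<Rightarrow> (nat \<Rightarrow> real) \<Rightarrow> real" where
  "bil M x y = (\<Sum>i<rk M. \<Sum>j<rk M. of_int (gram M i j) * x i * y j)"

text \<open>Dual lattice L^* and the 3-primary part of the discriminant group L^*/L
  (represented by elements of L^* some 3-power multiple of which lies in L).\<close>

definition dual_lat :: "int list list \<Rightarrow> (nat \<Rightarrow> real) set" where
  "dual_lat M = {x \<in> Vsp (rk M). \<forall>v \<in> lat (rk M). bil M x v \<in> \<int>}"

definition discr3_reps :: "int list list \<Rightarrow> (nat \<Rightarrow> real) set" where
  "discr3_reps M = {x \<in> dual_lat M. \<exists>k::nat. (\<lambda>i. 3 ^ k * x i) \<in> lat (rk M)}"

definition act :: "nat \<Rightarrow> (nat \<Rightarrow> nat \<Rightarrow> int) \<Rightarrow> (nat \<Rightarrow> real) \<Rightarrow> (nat \<Rightarrow> real)" where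
  "act n g x = (\<lambda>i. if i < n then (\<Sum>j<n. of_int (g i j) * x j) else 0)"

definition is_aut :: "int list list \<Rightarrow> (nat \<Rightarrow> nat \<Rightarrow> int) \<Rightarrow> bool" where
  "is_aut M g \<longleftrightarrow> bij_betw (act (rk M) g) (lat (rk M)) (lat (rk M)) \<and>
     (\<forall>x \<in> lat (rk M). \<forall>y \<in> lat (rk M). bil M (act (rk M) g x) (act (rk M) g y) = bil M x y)"

text \<open>Z/3-reversing: acts as -id on discr_3 L, i.e. g x + x \<in> L for x representing
  a class of 3-power order in L^*/L.\<close>

definition z3_reversing :: "int list list \<Rightarrow> (nat \<Rightarrow> nat \<Rightarrow> int) \<Rightarrow> bool" where
  "z3_reversing M g \<longleftrightarrow>
     (\<forall>x \<in> discr3_reps M. (\<lambda>i. act (rk M) g x i + x i) \<in> lat (rk M))"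

definition two_root :: "int list list \<Rightarrow> (nat \<Rightarrow> real) \<Rightarrow> bool" where
  "two_root M v \<longleftrightarrow> v \<in> lat (rk M) \<and> bil M v v = 2"

definition six_root :: "int list list \<Rightarrow> (nat \<Rightarrow> real) \<Rightarrow> bool" where
  "six_root M v \<longleftrightarrow> v \<in> lat (rk M) \<and> bil M v v = 6 \<and>
     (\<forall>x \<in> lat (rk M). bil M v x / 3 \<in> \<int>)"

definition lroot :: "int list list \<Rightarrow> (nat \<Rightarrow> real) \<Rightarrow> bool" where
  "lroot M v \<longleftrightarrow> two_root M v \<or> six_root M v"

text \<open>The form has signature (n-1,1); the hyperbolic space is the projectivisation of the
  cone of negative vectors, its double cover is the cone modulo positive scalars. We work with
  the cone itself (the preimage of the double cover). Mirrors of W are the hyperplanes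
  orthogonal to 2- and 6-roots; the lifts P^# of the cells (fundamental chambers of W)
  correspond to the connected components of the cone with all mirrors removed.\<close>

definition neg_cone :: "int list list \<Rightarrow> (nat \<Rightarrow> real) set" where
  "neg_cone M = {x \<in> Vsp (rk M). bil M x x < 0}"

definition cone_minus_mirrors :: "int list list \<Rightarrow> (nat \<Rightarrow> real) set" where
  "cone_minus_mirrors M = {x \<in> neg_cone M. \<forall>v. lroot M v \<longrightarrow> bil M v x \<noteq> 0}"

definition cell_lift :: "int list list \<Rightarrow> (nat \<Rightarrow> real) set \<Rightarrow> bool" where
  "cell_lift M K \<longleftrightarrow>
     (\<exists>x \<in> cone_minus_mirrors M. K = connected_component_set (cone_minus_mirrors M) x)"

definition P_direct :: "int list list \<Rightarrow> (nat \<Rightarrow> nat \<Rightarrow> int) \<Rightarrow> (nat \<Rightarrow> real) set \<Rightarrow> bool" where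
  "P_direct M g K \<longleftrightarrow> act (rk M) g ` K = K"

definition achiral :: "int list list \<Rightarrow> bool" where
  "achiral M \<longleftrightarrow> (\<exists>g. is_aut M g \<and> z3_reversing M g \<and> (\<exists>K. cell_lift M K \<and> P_direct M g K))"

definition osum :: "int list list \<Rightarrow> int list list \<Rightarrow> int list list" (infixr "\<oplus>\<^sub>L" 65) where
  "osum A B = map (\<lambda>r. r @ replicate (length B) 0) A @ map (\<lambda>r. replicate (length A) 0 @ r) B"

definition scaleL :: "int \<Rightarrow> int list list \<Rightarrow> int list list" where
  "scaleL c A = map (map (\<lambda>a. c * a)) A"

definition cartan :: "nat \<Rightarrow> (nat \<times> nat) list \<Rightarrow> int list list" where
  "cartan n E = map (\<lambda>i. map (\<lambda>j. if i = j then 2 else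
       if (i, j) \<in> set E \<or> (j, i) \<in> set E then -1 else 0) [0..<n]) [0..<n]"

definition U_lat :: "int list list" where "U_lat = [[0, 1], [1, 0]]"
definition A2_lat :: "int list list" where "A2_lat = cartan 2 [(0,1)]"
definition D4_lat :: "int list list" where "D4_lat = cartan 4 [(0,1),(1,2),(1,3)]"
definition E6_lat :: "int list list" where
  "E6_lat = cartan 6 [(0,2),(2,3),(3,4),(4,5),(1,3)]"
definition E8_lat :: "int list list" where
  "E8_lat = cartan 8 [(0,2),(2,3),(3,4),(4,5),(5,6),(6,7),(1,3)]"

end

theory Submission
  imports Defs
begin


definition curve :: "(nat \<Rightarrow> nat \<Rightarrow> real) \<Rightarrow> nat \<Rightarrow> real \<Rightarrow> nat \<Rightarrow> real" where
  "curve fs m t = (\<lambda>i. \<Sum>k\<le>m. t ^ k * fs k i)"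

lemma bil_sum_right:
  assumes "finite K"
  shows "bil M x (\<lambda>i. \<Sum>k\<in>K. c k * f k i) = (\<Sum>k\<in>K. c k * bil M x (f k))"
proof -
  have "bil M x (\<lambda>i. \<Sum>k\<in>K. c k * f k i) =
     (\<Sum>i<rk M. \<Sum>j<rk M. \<Sum>k\<in>K. c k * (of_int (gram M i j) * x i * f k j))"
    unfolding bil_def by (simp add: sum_distrib_left mult_ac)
  also have "\<dots> = (\<Sum>k\<in>K. \<Sum>i<rk M. \<Sum>j<rk M. c k * (of_int (gram M i j) * x i * f k j))"
    by (simp add: sum.swap[where A=K])
  also have "\<dots> = (\<Sum>k\<in>K. c k * bil M x (f k))"
    unfolding bil_def by (simp add: sum_distrib_left)
  finally show ?thesis .
qed

lemma bil_sum_left: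
  assumes "finite K"
  shows "bil M (\<lambda>i. \<Sum>k\<in>K. c k * f k i) y = (\<Sum>k\<in>K. c k * bil M (f k) y)"
proof -
  have "bil M (\<lambda>i. \<Sum>k\<in>K. c k * f k i) y =
     (\<Sum>i<rk M. \<Sum>j<rk M. \<Sum>k\<in>K. c k * (of_int (gram M i j) * f k i * y j))"
    unfolding bil_def by (simp add: sum_distrib_left sum_distrib_right mult_ac)
  also have "\<dots> = (\<Sum>k\<in>K. \<Sum>i<rk M. \<Sum>j<rk M. c k * (of_int (gram M i j) * f k i * y j))"
    by (simp add: sum.swap[where A=K])
  also have "\<dots> = (\<Sum>k\<in>K. c k * bil M (f k) y)"
    unfolding bil_def by (simp add: sum_distrib_left)
  finally show ?thesis .
qed

lemma act_sum:
  assumes "finite K"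
  shows "act n g (\<lambda>i. \<Sum>k\<in>K. c k * f k i) = (\<lambda>i. \<Sum>k\<in>K. c k * act n g (f k) i)"
proof
  fix i show "act n g (\<lambda>i. \<Sum>k\<in>K. c k * f k i) i = (\<Sum>k\<in>K. c k * act n g (f k) i)"
  proof (cases "i < n")
    case True
    have "(\<Sum>j<n. of_int (g i j) * (\<Sum>k\<in>K. c k * f k j)) = (\<Sum>j<n. \<Sum>k\<in>K. c k * (of_int (g i j) * f k j))"
      by (simp add: sum_distrib_left mult_ac)
    also have "\<dots> = (\<Sum>k\<in>K. c k * (\<Sum>j<n. of_int (g i j) * f k j))"
      by (simp add: sum.swap[where A=K] sum_distrib_left)
    finally show ?thesis using True by (simp add: act_def)
  qed (simp add: act_def)
qed

lemma act_Vsp: "act n g x \<in> Vsp n"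
  by (simp add: act_def Vsp_def)

lemma lat_Vsp: "lat n \<subseteq> Vsp n" by (auto simp: lat_def)

lemma act_lat: "x \<in> lat n \<Longrightarrow> act n g x \<in> lat n"
  by (auto simp: lat_def act_def Vsp_def intro!: Ints_sum Ints_mult)

lemma act_cont: "continuous_on UNIV (act n g)"
proof (rule continuous_on_coordinatewise_then_product)
  fix i
  show "continuous_on UNIV (\<lambda>x. act n g x i)"
    by (cases "i < n") (auto simp: act_def intro!: continuous_intros)
qed

lemma countable_lat: "countable (lat n)"
proof -
  have "lat n \<subseteq> range (\<lambda>xs::int list. \<lambda>i. if i < length xs then of_int (xs ! i) else (0::real))"
  proof
    fix x assume x: "x \<in> lat n"
    have "x = (\<lambda>i. if i < length (map (\<lambda>i. \<lfloor>x i\<rfloor>) [0..<n]) then of_int (map (\<lambda>i. \<lfloor>x i\<rfloor>) [0..<n] ! i) else 0)"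
    proof
      fix i show "x i = (if i < length (map (\<lambda>i. \<lfloor>x i\<rfloor>) [0..<n]) then of_int (map (\<lambda>i. \<lfloor>x i\<rfloor>) [0..<n] ! i) else 0)"
        using x by (auto simp: lat_def Vsp_def elim!: Ints_cases)
    qed
    then show "x \<in> range (\<lambda>xs::int list. \<lambda>i. if i < length xs then of_int (xs ! i) else (0::real))"
      by blast
  qed
  then show ?thesis by (rule countable_subset) simp
qed

lemma root_norm: "lroot M v \<Longrightarrow> bil M v v / 4 \<notin> \<int>"
proof
  assume "lroot M v" "bil M v v / 4 \<in> \<int>"
  then obtain z :: int where z: "bil M v v / 4 = of_int z" by (auto elim: Ints_cases)
  from \<open>lroot M v\<close> have "bil M v v = 2 \<or> bil M v v = 6"
    by (auto simp: lroot_def two_root_def six_root_def)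
  with z have "(4::real) * of_int z = 2 \<or> (4::real) * of_int z = 6" by auto
  then have "4 * z = 2 \<or> 4 * z = (6::int)" by linarith
  then show False by presburger
qed

definition fv :: "nat \<Rightarrow> (nat \<Rightarrow> int) \<Rightarrow> nat \<Rightarrow> real" where
  "fv n h = (\<lambda>b. if b < n then of_int (h b) else 0)"

lemma fv_lat: "fv n h \<in> lat n" by (auto simp: fv_def lat_def Vsp_def)
lemma fv_Vsp: "fv n h \<in> Vsp n" by (auto simp: fv_def Vsp_def)

lemma bil_fv_right:
  assumes "rk M = n"
  shows "bil M x (fv n h) = (\<Sum>a<n. x a * of_int (\<Sum>b<n. gram M a b * h b))"
  unfolding bil_def fv_def assms by (simp add: sum_distrib_left mult_ac)

lemma act_cols: "act n g x = (\<lambda>i. \<Sum>k<n. x k * fv n (\<lambda>i. g i k) i)"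
  by (auto simp: act_def fv_def mult_ac)

lemma iso_check:
  assumes n: "rk M = n"
  and A: "\<forall>i<n. \<forall>l<n. (\<Sum>j<n. gram M i j * g j l) = A i l"
  and B: "\<forall>k<n. \<forall>l<n. (\<Sum>i<n. g i k * A i l) = gram M k l"
  and x: "x \<in> Vsp n" and y: "y \<in> Vsp n"
  shows "bil M (act n g x) (act n g y) = bil M x y"
proof -
  have col: "bil M (fv n (\<lambda>i. g i k)) (fv n (\<lambda>i. g i l)) = of_int (gram M k l)" if "k<n" "l<n" for k l
  proof -
    have "bil M (fv n (\<lambda>i. g i k)) (fv n (\<lambda>i. g i l)) =
        (\<Sum>a<n. of_int (g a k) * of_int (A a l))"
      unfolding bil_fv_right[OF n] using A that by (simp add: fv_def)
    also have "\<dots> = of_int (\<Sum>a<n. g a k * A a l)" by simp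
    also have "\<dots> = of_int (gram M k l)" using B that by simp
    finally show ?thesis .
  qed
  have "bil M (act n g x) (act n g y) =
      (\<Sum>k<n. x k * (\<Sum>l<n. y l * bil M (fv n (\<lambda>i. g i k)) (fv n (\<lambda>i. g i l))))"
    unfolding act_cols by (simp add: bil_sum_left bil_sum_right)
  also have "\<dots> = (\<Sum>k<n. x k * (\<Sum>l<n. y l * of_int (gram M k l)))"
    by (simp add: col)
  also have "\<dots> = bil M x y"
    unfolding bil_def n by (simp add: sum_distrib_left mult_ac)
  finally show ?thesis .
qed

lemma inv_check:
  assumes I: "\<forall>i<n. \<forall>k<n. (\<Sum>j<n. g i j * g j k) = (if i = k then 1 else 0)"
  and x: "x \<in> Vsp n"
  shows "act n g (act n g x) = x"
proof
  fix i
  show "act n g (act n g x) i = x i"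
  proof (cases "i < n")
    case True
    have "act n g (act n g x) i = (\<Sum>j<n. of_int (g i j) * (\<Sum>k<n. of_int (g j k) * x k))"
      using True by (simp add: act_def)
    also have "\<dots> = (\<Sum>j<n. \<Sum>k<n. of_int (g i j * g j k) * x k)"
      by (simp add: sum_distrib_left mult_ac)
    also have "\<dots> = (\<Sum>k<n. of_int (\<Sum>j<n. g i j * g j k) * x k)"
      by (subst sum.swap) (simp add: sum_distrib_right)
    also have "\<dots> = (\<Sum>k<n. (if i = k then x k else 0))"
      using I True by (intro sum.cong) auto
    also have "\<dots> = x i" using True by simp
    finally show ?thesis .
  next
    case False
    then show ?thesis using x by (simp add: act_def Vsp_def)
  qed
qed

lemma fix_check:
  assumes "\<forall>i<n. (\<Sum>j<n. g i j * h j) = h i"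
  shows "act n g (fv n h) = fv n h"
  using assms by (auto simp: act_def fv_def simp flip: of_int_mult of_int_sum)

lemma three_int:
  fixes y :: real
  assumes "6 * y \<in> \<int>" "3 ^ k * y \<in> \<int>"
  shows "3 * y \<in> \<int>"
proof (cases k)
  case 0
  then show ?thesis using assms by simp
next
  case (Suc j)
  obtain q where q: "(3::int) ^ j = 2 * q + 1"
  proof -
    have "odd ((3::int) ^ j)" by simp
    then show ?thesis using that oddE by blast
  qed
  have "3 * y = 3 ^ Suc j * y - of_int q * (6 * y)"
  proof -
    have "(3::real) ^ j = 2 * of_int q + 1" using arg_cong[OF q, of "of_int :: int \<Rightarrow> real"] by simp
    then show ?thesis by (simp add: algebra_simps)
  qed
  then show ?thesis using assms Suc by (simp add: Ints_diff Ints_mult)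
qed

lemma z3_check:
  assumes n: "rk M = n"
  and L: "\<forall>i<n. \<forall>a<n. g i a + (if i = a then 1 else 0) = (\<Sum>b<n. gram M a b * lam i b) + 3 * mu i a"
  and C: "\<forall>i<n. \<forall>a<n. (\<Sum>b<n. gram M a b * cc i b) = (if i = a then 6 else 0)"
  shows "z3_reversing M g"
  unfolding z3_reversing_def
proof
  fix x assume x: "x \<in> discr3_reps M"
  then have xV: "x \<in> Vsp n" and xd: "\<And>v. v \<in> lat n \<Longrightarrow> bil M x v \<in> \<int>"
    using n by (auto simp: discr3_reps_def dual_lat_def)
  from x obtain k where k: "(\<lambda>i. 3 ^ k * x i) \<in> lat n" using n by (auto simp: discr3_reps_def)
  have six: "6 * x i \<in> \<int>" if "i < n" for i
  proof -
    have "bil M x (fv n (cc i)) = (\<Sum>a<n. x a * (if i = a then 6 else 0))"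
      unfolding bil_fv_right[OF n] using C that by (intro sum.cong) auto
    also have "\<dots> = 6 * x i" using that by (simp add: if_distrib cong: if_cong)
    finally have "bil M x (fv n (cc i)) = 6 * x i" .
    then show ?thesis using xd[OF fv_lat[of n "cc i"]] by simp
  qed
  have three: "3 * x a \<in> \<int>" if "a < n" for a
    using three_int[OF six[OF that]] k that by (auto simp: lat_def)
  have "act n g x i + x i \<in> \<int>" for i
  proof (cases "i < n")
    case True
    have "act n g x i + x i = (\<Sum>a<n. of_int (g i a) * x a) + (\<Sum>a<n. if i = a then x a else 0)"
      using True by (simp add: act_def)
    also have "\<dots> = (\<Sum>a<n. of_int (g i a + (if i = a then 1 else 0)) * x a)"
      by (subst sum.distrib[symmetric], rule sum.cong) (auto simp: algebra_simps)
    also have "\<dots> = (\<Sum>a<n. x a * of_int (\<Sum>b<n. gram M a b * lam i b)) + (\<Sum>a<n. of_int (mu i a) * (3 * x a))"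
      using L True by (simp add: sum.distrib[symmetric] algebra_simps)
    also have "\<dots> = bil M x (fv n (lam i)) + (\<Sum>a<n. of_int (mu i a) * (3 * x a))"
      by (simp add: bil_fv_right[OF n])
    moreover have "(\<Sum>a<n. of_int (mu i a) * (3 * x a)) \<in> \<int>"
    proof (rule Ints_sum)
      fix a assume "a \<in> {..<n}"
      then show "of_int (mu i a) * (3 * x a) \<in> \<int>" by (intro Ints_mult[OF Ints_of_int three]) simp
    qed
    ultimately show ?thesis using xd[OF fv_lat[of n "lam i"]] by (metis Ints_add)
  next
    case False
    then show ?thesis using xV by (simp add: act_def Vsp_def)
  qed
  moreover have "\<forall>i\<ge>n. act n g x i + x i = 0" using xV by (simp add: act_def Vsp_def)
  ultimately show "(\<lambda>i. act (rk M) g x i + x i) \<in> lat (rk M)"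
    using n by (simp add: lat_def Vsp_def)
qed

lemma comp_image_sub:
  assumes cont: "continuous_on UNIV f" and inS: "\<And>y. y \<in> S \<Longrightarrow> f y \<in> S" and x: "x \<in> S"
  shows "f ` connected_component_set S x \<subseteq> connected_component_set S (f x)"
proof (rule connected_component_maximal)
  show "f x \<in> f ` connected_component_set S x" using x by (simp add: connected_component_refl_eq)
  show "connected (f ` connected_component_set S x)"
    by (rule connected_continuous_image) (auto intro: continuous_on_subset[OF cont])
  show "f ` connected_component_set S x \<subseteq> S"
    using inS connected_component_subset by blast
qed

lemma achiral_crit:
  fixes M :: "int list list" and g :: "nat \<Rightarrow> nat \<Rightarrow> int" and fs :: "nat \<Rightarrow> nat \<Rightarrow> real"
  assumes n: "rk M = n"
  and iso: "\<And>x y. x \<in> Vsp n \<Longrightarrow> y \<in> Vsp n \<Longrightarrow> bil M (act n g x) (act n g y) = bil M x y"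
  and invo: "\<And>x. x \<in> Vsp n \<Longrightarrow> act n g (act n g x) = x"
  and z3: "z3_reversing M g"
  and fixV: "\<And>k. k \<le> m \<Longrightarrow> fs k \<in> Vsp n"
  and fixg: "\<And>k. k \<le> m \<Longrightarrow> act n g (fs k) = fs k"
  and noroot: "\<And>v. v \<in> lat n \<Longrightarrow> (\<forall>k\<le>m. bil M v (fs k) = 0) \<Longrightarrow> bil M v v / 4 \<in> \<int>"
  and epos: "\<epsilon> > 0"
  and neg: "\<And>t. 0 < t \<Longrightarrow> t < \<epsilon> \<Longrightarrow> bil M (curve fs m t) (curve fs m t) < 0"
  shows "achiral M"
proof -
  let ?g = "act n g"
  let ?S = "cone_minus_mirrors M"
  have aut: "is_aut M g"
    unfolding is_aut_def n
  proof
    show "bij_betw ?g (lat n) (lat n)"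
      by (rule bij_betw_byWitness[where f'="?g"]) (auto simp: act_lat invo lat_Vsp[THEN subsetD])
    show "\<forall>x\<in>lat n. \<forall>y\<in>lat n. bil M (?g x) (?g y) = bil M x y"
      using iso lat_Vsp by blast
  qed
  have swap: "bil M v (?g x) = bil M (?g v) x" if "v \<in> Vsp n" "x \<in> Vsp n" for v x
    using iso[of "?g v" x] invo that act_Vsp by simp
  have rootg: "lroot M (?g v)" if "lroot M v" for v
  proof -
    have vl: "v \<in> lat n" using that n by (auto simp: lroot_def two_root_def six_root_def)
    then have vV: "v \<in> Vsp n" using lat_Vsp by blast
    have gl: "?g v \<in> lat n" using vl act_lat by blast
    have nn: "bil M (?g v) (?g v) = bil M v v" using iso vV by blast
    have "six_root M (?g v)" if "six_root M v"
    proof -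
      have "bil M (?g v) x / 3 \<in> \<int>" if "x \<in> lat n" for x
      proof -
        have xV: "x \<in> Vsp n" using that lat_Vsp by blast
        have "bil M (?g v) x = bil M v (?g x)" using swap[OF vV xV] by simp
        moreover have "?g x \<in> lat n" using that act_lat by blast
        ultimately show ?thesis using \<open>six_root M v\<close> n by (simp add: six_root_def)
      qed
      then show ?thesis using \<open>six_root M v\<close> gl nn n by (simp add: six_root_def)
    qed
    then show ?thesis using that gl nn n by (auto simp: lroot_def two_root_def)
  qed
  have Sinv: "?g y \<in> ?S" if "y \<in> ?S" for y
  proof -
    have yV: "y \<in> Vsp n" and yn: "bil M y y < 0" and ym: "\<And>v. lroot M v \<Longrightarrow> bil M v y \<noteq> 0"
      using that n by (auto simp: cone_minus_mirrors_def neg_cone_def)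
    have "bil M v (?g y) \<noteq> 0" if "lroot M v" for v
    proof -
      have "v \<in> Vsp n" using that n lat_Vsp by (auto simp: lroot_def two_root_def six_root_def)
      then have "bil M v (?g y) = bil M (?g v) y" using swap yV by blast
      then show ?thesis using ym rootg that by simp
    qed
    then show ?thesis using iso[OF yV yV] yn act_Vsp n
      by (auto simp: cone_minus_mirrors_def neg_cone_def)
  qed
  define Z where "Z = (\<Union>v\<in>{v. lroot M v}. {t::real. (\<Sum>k\<le>m. bil M v (fs k) * t ^ k) = 0})"
  have cntR: "countable {v. lroot M v}"
    by (rule countable_subset[OF _ countable_lat[of n]]) (auto simp: lroot_def two_root_def six_root_def n)
  have finZ: "finite {t::real. (\<Sum>k\<le>m. bil M v (fs k) * t ^ k) = 0}" if "lroot M v" for v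
  proof -
    have vl: "v \<in> lat n" using that n by (auto simp: lroot_def two_root_def six_root_def)
    have "\<not> (\<forall>k\<le>m. bil M v (fs k) = 0)"
      using noroot[OF vl] root_norm[OF that] by metis
    then obtain k where k: "k \<le> m" "bil M v (fs k) \<noteq> 0" by auto
    show ?thesis by (rule polyfun_roots_finite[where c="\<lambda>k. bil M v (fs k)" and k=k and n=m]) (use k in auto)
  qed
  have "countable Z" unfolding Z_def
    using cntR finZ by (intro countable_UN) (auto intro: countable_finite)
  moreover have "uncountable {0<..<\<epsilon>}" using epos by (simp add: uncountable_open_interval)
  ultimately have "\<not> {0<..<\<epsilon>} \<subseteq> Z" using countable_subset by blast
  then obtain t where t: "0 < t" "t < \<epsilon>" "t \<notin> Z" by (auto simp: subset_iff)
  define x0 where "x0 = curve fs m t"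
  have x0V: "x0 \<in> Vsp n" using fixV by (auto simp: x0_def curve_def Vsp_def)
  have x0S: "x0 \<in> ?S"
  proof -
    have "bil M v x0 \<noteq> 0" if "lroot M v" for v
    proof -
      have "bil M v x0 = (\<Sum>k\<le>m. t ^ k * bil M v (fs k))"
        unfolding x0_def curve_def by (rule bil_sum_right) simp
      also have "\<dots> = (\<Sum>k\<le>m. bil M v (fs k) * t ^ k)" by (simp add: mult.commute)
      finally show ?thesis using t(3) that by (auto simp: Z_def)
    qed
    then show ?thesis using x0V neg[OF t(1,2)] n
      by (auto simp: cone_minus_mirrors_def neg_cone_def x0_def)
  qed
  have x0g: "?g x0 = x0"
    unfolding x0_def curve_def by (subst act_sum) (auto simp: fixg)
  define K where "K = connected_component_set ?S x0"
  have sub: "?g ` K \<subseteq> K"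
    using comp_image_sub[OF act_cont Sinv x0S] x0g by (simp add: K_def)
  have "K \<subseteq> ?g ` K"
  proof
    fix y assume "y \<in> K"
    then have yS: "y \<in> ?S" using connected_component_subset K_def by blast
    then have "y \<in> Vsp n" using n by (auto simp: cone_minus_mirrors_def neg_cone_def)
    then have "y = ?g (?g y)" using invo by simp
    moreover have "?g y \<in> K" using sub \<open>y \<in> K\<close> by blast
    ultimately show "y \<in> ?g ` K" by blast
  qed
  with sub have "?g ` K = K" by blast
  then have "cell_lift M K \<and> P_direct M g K"
    using x0S n by (auto simp: cell_lift_def P_direct_def K_def)
  then show ?thesis using aut z3 by (auto simp: achiral_def)
qed

lemma quad4:
  fixes p :: "nat \<Rightarrow> int" and B :: "nat \<Rightarrow> nat \<Rightarrow> int"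
  assumes "\<forall>s<r. 4 dvd B s s" "\<forall>s<r. \<forall>t<r. 2 dvd B s t" "\<forall>s<r. \<forall>t<r. B s t = B t s"
  shows "4 dvd (\<Sum>s<r. \<Sum>t<r. p s * p t * B s t)"
  using assms
proof (induction r)
  case 0
  then show ?case by simp
next
  case (Suc r)
  have IH: "4 dvd (\<Sum>s<r. \<Sum>t<r. p s * p t * B s t)" using Suc by auto
  have sym: "(\<Sum>t<r. p r * p t * B r t) = (\<Sum>s<r. p s * p r * B s r)"
    using Suc.prems(3) by (intro sum.cong) (auto simp: mult_ac)
  have eq: "(\<Sum>s<Suc r. \<Sum>t<Suc r. p s * p t * B s t) =
     (\<Sum>s<r. \<Sum>t<r. p s * p t * B s t) + 2 * (\<Sum>s<r. p s * p r * B s r) + p r * p r * B r r"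
    using sym by (simp add: sum.distrib)
  have d1: "4 dvd 2 * (\<Sum>s<r. p s * p r * B s r)"
  proof -
    have "2 dvd (\<Sum>s<r. p s * p r * B s r)"
      using Suc.prems(2) by (intro dvd_sum) auto
    then show ?thesis by auto
  qed
  have d2: "4 dvd p r * p r * B r r" using Suc.prems(1) by auto
  show ?case unfolding eq using IH d1 d2 by (intro dvd_add)
qed

lemma Ints_floor_eq: "(x::real) \<in> \<int> \<Longrightarrow> of_int \<lfloor>x\<rfloor> = x"
  by (auto elim: Ints_cases)

lemma noroot_check:
  fixes r m :: nat and N phi F Fm :: "nat \<Rightarrow> nat \<Rightarrow> int" and R :: "nat \<Rightarrow> nat \<Rightarrow> int"
  and NG :: "nat \<Rightarrow> nat \<Rightarrow> int" and D :: int
  assumes n: "rk M = n"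
  and Fm: "\<forall>k\<le>m. \<forall>a<n. (\<Sum>b<n. gram M a b * F k b) = Fm k a"
  and cert: "\<forall>i<n. \<forall>j<n. D * (if i = j then 1 else 0) = D * (\<Sum>s<r. N s i * phi s j) + (\<Sum>k\<le>m. R i k * Fm k j)"
  and NG: "\<forall>s<r. \<forall>t<r. (\<Sum>a<n. N s a * (\<Sum>b<n. gram M a b * N t b)) = NG s t"
  and d4: "\<forall>s<r. 4 dvd NG s s" and d2: "\<forall>s<r. \<forall>t<r. 2 dvd NG s t"
  and sym: "\<forall>s<r. \<forall>t<r. NG s t = NG t s"
  and D: "D \<noteq> 0"
  and v: "v \<in> lat n" and orth: "\<forall>k\<le>m. bil M v (fv n (F k)) = 0"
  shows "bil M v v / 4 \<in> \<int>"
proof -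
  have vV: "\<And>i. i \<ge> n \<Longrightarrow> v i = 0" and vi: "\<And>i. i < n \<Longrightarrow> v i \<in> \<int>"
    using v by (auto simp: lat_def Vsp_def)
  define p where "p s = (\<Sum>j<n. of_int (phi s j) * v j)" for s
  define q where "q s = \<lfloor>p s\<rfloor>" for s
  have pq: "p s = of_int (q s)" for s
  proof -
    have "p s \<in> \<int>" unfolding p_def using vi by (intro Ints_sum Ints_mult) auto
    then show ?thesis unfolding q_def by (simp add: Ints_floor_eq)
  qed
  have orth': "(\<Sum>j<n. of_int (Fm k j) * v j) = 0" if "k \<le> m" for k
  proof -
    have "bil M v (fv n (F k)) = (\<Sum>a<n. v a * of_int (Fm k a))"
      unfolding bil_fv_right[OF n] using Fm that by (intro sum.cong) auto
    then show ?thesis using orth that by (simp add: mult.commute)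
  qed
  have vexp: "v = (\<lambda>i. \<Sum>s<r. p s * fv n (N s) i)"
  proof
    fix i
    show "v i = (\<Sum>s<r. p s * fv n (N s) i)"
    proof (cases "i < n")
      case True
      have "(\<Sum>j<n. of_int (D * (if i = j then 1 else 0)) * v j) = (\<Sum>j<n. if i = j then of_int D * v j else 0)"
        by (intro sum.cong) auto
      then have "of_int D * v i = (\<Sum>j<n. of_int (D * (if i = j then 1 else 0)) * v j)"
        using True by simp
      also have "\<dots> = (\<Sum>j<n. of_int (D * (\<Sum>s<r. N s i * phi s j) + (\<Sum>k\<le>m. R i k * Fm k j)) * v j)"
        using cert True by (intro sum.cong) auto
      also have "\<dots> = of_int D * (\<Sum>j<n. of_int (\<Sum>s<r. N s i * phi s j) * v j) + (\<Sum>j<n. of_int (\<Sum>k\<le>m. R i k * Fm k j) * v j)"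
        by (simp only: of_int_add of_int_mult distrib_right sum.distrib mult.assoc) (simp only: sum_distrib_left)
      also have "(\<Sum>j<n. of_int (\<Sum>s<r. N s i * phi s j) * v j) = (\<Sum>s<r. of_int (N s i) * p s)"
        unfolding p_def by (simp add: sum_distrib_left sum_distrib_right mult_ac) (rule sum.swap)
      also have "(\<Sum>j<n. of_int (\<Sum>k\<le>m. R i k * Fm k j) * v j) = (\<Sum>k\<le>m. of_int (R i k) * (\<Sum>j<n. of_int (Fm k j) * v j))"
        by (simp add: sum_distrib_left sum_distrib_right mult_ac) (rule sum.swap)
      also have "(\<Sum>k\<le>m. of_int (R i k) * (\<Sum>j<n. of_int (Fm k j) * v j)) = 0"
        using orth' by (intro sum.neutral) auto
      also have "of_int D * (\<Sum>s<r. of_int (N s i) * p s) + 0 = of_int D * (\<Sum>s<r. of_int (N s i) * p s)"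
        by simp
      finally have "of_int D * v i = of_int D * (\<Sum>s<r. of_int (N s i) * p s)" .
      then have "v i = (\<Sum>s<r. of_int (N s i) * p s)" using D by simp
      then show ?thesis using True by (simp add: fv_def mult.commute)
    next
      case False
      then show ?thesis using vV by (simp add: fv_def)
    qed
  qed
  have bNN: "bil M (fv n (N s)) (fv n (N t)) = of_int (NG s t)" if "s < r" "t < r" for s t
  proof -
    have "bil M (fv n (N s)) (fv n (N t)) = (\<Sum>a<n. of_int (N s a) * of_int (\<Sum>b<n. gram M a b * N t b))"
      unfolding bil_fv_right[OF n] by (simp add: fv_def)
    also have "\<dots> = of_int (NG s t)" using NG that by (simp flip: of_int_mult of_int_sum)
    finally show ?thesis .
  qed
  have "bil M v v = bil M (\<lambda>i. \<Sum>s<r. p s * fv n (N s) i) (\<lambda>i. \<Sum>s<r. p s * fv n (N s) i)"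
    using vexp by simp
  also have "\<dots> = (\<Sum>s<r. p s * (\<Sum>t<r. p t * bil M (fv n (N s)) (fv n (N t))))"
    by (simp only: bil_sum_left[OF finite_lessThan] bil_sum_right[OF finite_lessThan])
  also have "\<dots> = (\<Sum>s<r. p s * (\<Sum>t<r. p t * of_int (NG s t)))"
    using bNN by (intro sum.cong refl arg_cong2[where f="(*)"]) auto
  also have "\<dots> = of_int (\<Sum>s<r. \<Sum>t<r. q s * q t * NG s t)"
    by (simp add: pq sum_distrib_left mult_ac)
  finally have eq: "bil M v v = of_int (\<Sum>s<r. \<Sum>t<r. q s * q t * NG s t)" .
  obtain z where "(\<Sum>s<r. \<Sum>t<r. q s * q t * NG s t) = 4 * z"
    using quad4[OF d4 d2 sym, where p=q] by (auto elim: dvdE)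
  then show ?thesis unfolding eq by simp
qed

lemma neg_check:
  fixes m :: nat and F Fm FG :: "nat \<Rightarrow> nat \<Rightarrow> int" and Bd :: int and t :: real
  assumes n: "rk M = n"
  and Fm: "\<forall>k\<le>m. \<forall>a<n. (\<Sum>b<n. gram M a b * F k b) = Fm k a"
  and FG: "\<forall>k\<le>m. \<forall>l\<le>m. (\<Sum>a<n. F k a * Fm l a) = FG k l"
  and f00: "FG 0 0 \<le> -1" and bd: "\<forall>k\<le>m. \<forall>l\<le>m. \<bar>FG k l\<bar> \<le> Bd"
  and t: "0 < t" "t < 1 / (of_nat ((m+1)*(m+1)) * of_int Bd + 1)"
  shows "bil M (curve (\<lambda>k. fv n (F k)) m t) (curve (\<lambda>k. fv n (F k)) m t) < 0"
proof -
  have bff: "bil M (fv n (F k)) (fv n (F l)) = of_int (FG k l)" if "k\<le>m" "l\<le>m" for k l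
  proof -
    have "bil M (fv n (F k)) (fv n (F l)) = (\<Sum>a<n. of_int (F k a) * of_int (Fm l a))"
      unfolding bil_fv_right[OF n] using Fm that by (intro sum.cong) (auto simp: fv_def)
    also have "\<dots> = of_int (FG k l)" using FG that by (simp flip: of_int_mult of_int_sum)
    finally show ?thesis .
  qed
  have Bd0: "0 \<le> Bd" using bd by (metis abs_ge_zero order_trans le0)
  define c where "c = real ((m+1)*(m+1)) * of_int Bd"
  have c0: "0 \<le> c" using Bd0 by (simp add: c_def)
  have tc: "t * (c + 1) < 1" using t c0 unfolding c_def by (simp add: field_simps)
  have t1: "t \<le> 1" using tc t c0 by (smt (verit, best) mult_le_cancel_left1)
  have "bil M (curve (\<lambda>k. fv n (F k)) m t) (curve (\<lambda>k. fv n (F k)) m t)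
      = (\<Sum>k\<le>m. t ^ k * (\<Sum>l\<le>m. t ^ l * bil M (fv n (F k)) (fv n (F l))))"
    unfolding curve_def by (simp add: bil_sum_left bil_sum_right)
  also have "\<dots> = (\<Sum>k\<le>m. \<Sum>l\<le>m. t ^ k * t ^ l * of_int (FG k l))"
    using bff by (simp add: sum_distrib_left mult_ac)
  also have "\<dots> \<le> (\<Sum>k\<le>m. \<Sum>l\<le>m. (if k = 0 \<and> l = 0 then of_int (FG 0 0) else 0) + t * of_int Bd)"
  proof (intro sum_mono)
    fix k l assume kl: "k \<in> {..m}" "l \<in> {..m}"
    show "t ^ k * t ^ l * of_int (FG k l) \<le> (if k = 0 \<and> l = 0 then of_int (FG 0 0) else 0) + t * of_int Bd"
    proof (cases "k = 0 \<and> l = 0")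
      case True
      then show ?thesis using t Bd0 by simp
    next
      case False
      then have "k + l \<ge> 1" by auto
      have pw: "t ^ (k + l) \<le> t"
      proof -
        have "t ^ (k + l) = t * t ^ (k + l - 1)" using \<open>k + l \<ge> 1\<close>
          by (metis Suc_diff_le diff_Suc_1 power_Suc)
        also have "\<dots> \<le> t * 1" using t t1 by (intro mult_left_mono power_le_one) auto
        finally show ?thesis by simp
      qed
      have hb: "\<bar>FG k l\<bar> \<le> Bd" using bd kl by auto
      have hb': "\<bar>real_of_int (FG k l)\<bar> \<le> real_of_int Bd" using hb by (metis of_int_abs of_int_le_iff)
      have "t ^ k * t ^ l * of_int (FG k l) \<le> t ^ (k + l) * \<bar>of_int (FG k l)\<bar>"
        by (simp add: power_add abs_le_iff mult_left_mono t(1) less_imp_le)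
      also have "\<dots> \<le> t ^ (k + l) * of_int Bd"
        using hb' t by (intro mult_left_mono) auto
      also have "\<dots> \<le> t * of_int Bd" using pw Bd0 by (intro mult_right_mono) auto
      moreover have "(if k = 0 \<and> l = 0 then of_int (FG 0 0) else 0) = (0::real)" using False by auto
      ultimately show ?thesis by linarith
    qed
  qed
  also have "\<dots> = of_int (FG 0 0) + c * t"
  proof -
    have inner: "(\<Sum>l\<le>m. if k = 0 \<and> l = 0 then a else 0) = (if k = 0 then a else 0)" for k :: nat and a :: real
      by (cases "k = 0") simp_all
    show ?thesis by (simp add: sum.distrib c_def inner algebra_simps)
  qed
  also have "\<dots> < 0"
  proof -
    have "real_of_int (FG 0 0) \<le> -1" using f00 by simp
    moreover have "c * t < 1" using tc t(1) by (simp add: algebra_simps)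
    ultimately show ?thesis by linarith
  qed
  finally show ?thesis .
qed


lemma all_lt_code: "(\<forall>i<n. P i) = list_all P [0..<n]"
  by (auto simp: list_all_iff)

lemma all_le_code: "(\<forall>i\<le>m. P i) = list_all P [0..<Suc m]"
  by (auto simp: list_all_iff less_Suc_eq_le)

lemma sum_lt_code: "(\<Sum>i<n. f i) = sum_list (map f [0..<n])"
  by (simp add: sum_list_distinct_conv_sum_set atLeast0LessThan)

lemma sum_le_code: "(\<Sum>i\<le>m. f i) = sum_list (map f [0..<Suc m])"
  by (subst lessThan_Suc_atMost[symmetric]) (rule sum_lt_code)

definition M_L1 :: "int list list" where
  "M_L1 = [[0, 1, 0, 0, 0, 0, 0, 0, 0, 0, 0, 0, 0, 0, 0, 0], [1, 0, 0, 0, 0, 0, 0, 0, 0, 0, 0, 0, 0, 0, 0, 0], [0, 0, 2, -1, 0, 0, 0, 0, 0, 0, 0, 0, 0, 0, 0, 0], [0, 0, -1, 2, 0, 0, 0, 0, 0, 0, 0, 0, 0, 0, 0, 0], [0, 0, 0, 0, 2, -1, 0, 0, 0, 0, 0, 0, 0, 0, 0, 0], [0, 0, 0, 0, -1, 2, -1, -1, 0, 0, 0, 0, 0, 0, 0, 0], [0, 0, 0, 0, 0, -1, 2, 0, 0, 0, 0, 0, 0, 0, 0, 0], [0, 0, 0, 0, 0, -1, 0, 2, 0, 0, 0, 0, 0, 0, 0, 0], [0, 0, 0, 0, 0, 0, 0, 0, 2, 0, -1, 0, 0, 0, 0, 0], [0, 0, 0, 0, 0, 0, 0, 0, 0, 2,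 0, -1, 0, 0, 0, 0], [0, 0, 0, 0, 0, 0, 0, 0, -1, 0, 2, -1, 0, 0, 0, 0], [0, 0, 0, 0, 0, 0, 0, 0, 0, -1, -1, 2, -1, 0, 0, 0], [0, 0, 0, 0, 0, 0, 0, 0, 0, 0, 0, -1, 2, -1, 0, 0], [0, 0, 0, 0, 0, 0, 0, 0, 0, 0, 0, 0, -1, 2, -1, 0], [0, 0, 0, 0, 0, 0, 0, 0, 0, 0, 0, 0, 0, -1, 2, -1], [0, 0, 0, 0, 0, 0, 0, 0, 0, 0, 0, 0, 0, 0, -1, 2]]"

definition g_L1 :: "int list list" where
  "g_L1 = [[256, -228, 32, -142, 70, 272, -196, -386, -2, -2, -2, -3, -1, 2, 25, 44], [-286, 256, -36, 159, -78, -305, 220, 432, 3, 2, 2, 3, 2, -3, -28, -49], [29, -26, 4, -16, 8, 31, -22, -44, 0, 0, -1, 0, 0, 0, 3, 5], [94, -84, 12, -52, 26, 100, -72, -142, -1, -1, -1, -1, 0, 1, 9, 16], [-57, 51, -7, 32, -15, -61, 44, 86, 0, 0, 1, 1, 0, -1, -5, -10], [-36, 32, -4, 20, -10, -38, 28, 54, 0, -1, 1, 1, 0, -1, -3, -6], [92, -82, 12, -51, 25, 98, -70, -139, -1, -1, 0, -1, -1, 1, 9, 16], [198, -177, 25, -110, 54, 211, -152, -299, -2, -2, -1, -2, -1, 1, 20, 34], [-146, 130, -18, 81, -40, -155, 112, 220, 2, 2, 2, 0, 2, -2, -14, -26], [-222, 197, -27, 123, -60, -236, 170, 334, 3, 3,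 3, 0, 3, -3, -22, -38], [-295, 262, -37, 164, -80, -313, 226, 444, 4, 4, 4, 0, 4, -4, -29, -51], [-446, 396, -55, 248, -121, -473, 341, 671, 6, 6, 6, 0, 6, -6, -44, -77], [-378, 336, -47, 211, -103, -401, 289, 569, 5, 5, 5, 0, 5, -5, -37, -65], [-312, 277, -39, 174, -85, -331, 239, 469, 4, 4, 4, 0, 4, -4, -30, -54], [-243, 216, -30, 135, -66, -258, 186, 366, 3, 3, 3, 0, 3, -3, -23, -42], [-146, 130, -18, 81, -40, -155, 112, 220, 1, 2, 2, 0, 2, -2, -14, -25]]"

definition A_L1 :: "int list list" where
  "A_L1 = [[-286, 256, -36, 159, -78, -305, 220, 432, 3, 2, 2, 3, 2, -3, -28, -49], [256, -228, 32, -142, 70, 272, -196, -386, -2, -2, -2, -3, -1, 2, 25, 44], [-36, 32, -4, 20, -10, -38, 28, 54, 1, 1, -1, 1, 0, -1, -3, -6], [159, -142, 20, -88, 44, 169, -122, -240, -2, -2, -1, -2, 0, 2, 15, 27], [-78, 70, -10, 44, -20, -84, 60, 118, 0, 1, 1, 1, 0, -1, -7, -14], [-305, 272, -38, 169, -84, -324, 234, 460, 3, 1, 2, 4, 2, -3, -30, -52], [220, -196, 28, -122, 60, 234, -168, -332, -2, -1, -1, -3, -2, 3, 21, 38], [432, -386, 54, -240, 118, 460, -332, -652, -4, -3, -3, -5, -2, 3, 43, 74], [3, -2, 1, -2, 0, 3, -2, -4, 0, 0, 0, 0, 0, 0, 1, -1], [2, -2, 1, -2, 1, 1, -1, -3,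 0, 0, 0, 0, 0, 0, 0, 1], [2, -2, -1, -1, 1, 2, -1, -3, 0, 0, 0, 0, 0, 0, 0, 1], [3, -3, 1, -2, 1, 4, -3, -5, 0, 0, 0, 0, 0, 0, 0, 0], [2, -1, 0, 0, 0, 2, -2, -2, 0, 0, 0, 0, 0, 0, 0, 1], [-3, 2, -1, 2, -1, -3, 3, 3, 0, 0, 0, 0, 0, 0, 0, -1], [-28, 25, -3, 15, -7, -30, 21, 43, 1, 0, 0, 0, 0, 0, -2, -5], [-49, 44, -6, 27, -14, -52, 38, 74, -1, 1, 1, 0, 1, -1, -5, -8]]"

definition lam_L1 :: "int list list" where
  "lam_L1 = [[0, 2, 1, 0, 0, 2, 2, 0, 1, 2, 1, 0, 0, 1, 0, 1], [2, 2, 0, 0, 0, 0, 2, 0, 1, 0, 2, 1, 0, 0, 0, 1], [1, 2, 1, 0, 0, 1, 0, 1, 0, 2, 0, 1, 0, 2, 1, 0], [0, 1, 0, 0, 1, 0, 0, 1, 0, 1, 1, 0, 2, 1, 2, 0], [0, 0, 1, 0, 2, 0, 1, 1, 1, 1, 2, 2, 0, 1, 0, 1], [2, 0, 1, 0, 0, 1, 1, 2, 0, 2, 0, 2, 1, 0, 0, 0], [2, 2, 0, 0, 1, 1, 2, 0, 2, 2, 2, 2, 1, 1, 0, 2], [0, 0, 2, 0, 1, 2, 0, 2, 2, 0, 0, 2, 0, 2, 0, 2], [1, 1, 0, 0, 1, 0, 2, 2, 1, 0, 2, 1, 0, 0, 2, 0], [2, 0, 0, 0, 1, 2, 2, 0,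 0, 2, 0, 0, 1, 2, 0, 2], [1, 2, 1, 0, 2, 0, 2, 0, 2, 0, 0, 2, 1, 2, 1, 2], [0, 1, 1, 0, 2, 2, 2, 2, 1, 0, 2, 0, 0, 0, 0, 2], [0, 0, 2, 0, 0, 1, 1, 0, 0, 1, 1, 0, 1, 2, 2, 0], [1, 0, 0, 0, 1, 0, 1, 2, 0, 2, 2, 0, 2, 0, 1, 2], [0, 0, 0, 0, 0, 0, 0, 0, 2, 0, 1, 0, 2, 1, 0, 0], [1, 1, 0, 0, 1, 0, 2, 2, 0, 2, 2, 2, 0, 2, 0, 0]]"

definition mu_L1 :: "int list list" where
  "mu_L1 = [[85, -76, 10, -47, 24, 90, -66, -128, -1, -2, -1, 0, 0, 0, 9, 14], [-96, 85, -12, 53, -26, -101, 72, 144, 1, 1, 0, 1, 1, -1, -9, -17], [9, -9, 1, -5, 3, 10, -7, -15, 0, -1, 0, 0, 1, -1, 1, 2], [31, -28, 4, -17, 8, 34, -24, -48, 0, -1, -1, 1, -1, 1, 2, 6], [-19, 17, -3, 11, -6, -19, 14, 28, 0, 0, 0, 0, 1, -1, -1, -4], [-12, 10, -2, 7, -3, -12, 9, 17, 0, -1, 1, 0, 0, 0, -1, -2], [30, -28, 4, -17, 8, 33, -24, -46, -1, -1, 0, 0, 0, 0, 4, 4], [66, -59, 7, -36, 18, 70, -50, -100, -2, 0, 1, -2, 1, -1, 8, 10], [-49, 43, -6, 27, -14, -50, 36, 72, 1, 1, 0, 0, 1, 0, -6, -8], [-74, 65, -9, 41, -20, -79, 56,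 112, 1, 0, 1, 1, 1, -2, -6, -14], [-99, 87, -13, 55, -28, -103, 74, 148, 0, 2, 3, -1, 2, -2, -9, -18], [-149, 132, -19, 83, -41, -157, 113, 223, 2, 2, 1, 1, 2, -2, -14, -27], [-126, 112, -17, 71, -34, -134, 96, 190, 2, 1, 1, 1, 2, -2, -13, -21], [-104, 92, -13, 58, -29, -109, 79, 155, 2, 0, 0, 2, 0, 0, -10, -19], [-81, 72, -10, 45, -22, -86, 62, 122, 0, 1, 1, 1, 0, -1, -7, -14], [-49, 43, -6, 27, -14, -50, 36, 72, 1, 0, 0, 0, 2, -2, -4, -8]]"

definition C_L1 :: "int list list" where
  "C_L1 = [[0, 6, 0, 0, 0, 0, 0, 0, 0, 0, 0, 0, 0, 0, 0, 0], [6, 0, 0, 0, 0, 0, 0, 0, 0, 0, 0, 0, 0, 0, 0, 0], [0, 0, 4, 2, 0, 0, 0, 0, 0, 0, 0, 0, 0, 0, 0, 0], [0, 0, 2, 4, 0, 0, 0, 0, 0, 0, 0, 0, 0, 0, 0, 0], [0, 0, 0, 0, 6, 6, 3, 3, 0, 0, 0, 0, 0, 0, 0, 0], [0, 0, 0, 0, 6, 12, 6, 6, 0, 0, 0, 0, 0, 0, 0, 0], [0, 0, 0, 0, 3, 6, 6, 3, 0, 0, 0, 0, 0, 0, 0, 0], [0, 0, 0, 0, 3, 6, 3, 6, 0, 0, 0, 0, 0, 0, 0, 0], [0, 0, 0, 0, 0, 0, 0, 0, 24, 30, 42, 60, 48, 36, 24, 12], [0, 0, 0, 0, 0, 0, 0,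 0, 30, 48, 60, 90, 72, 54, 36, 18], [0, 0, 0, 0, 0, 0, 0, 0, 42, 60, 84, 120, 96, 72, 48, 24], [0, 0, 0, 0, 0, 0, 0, 0, 60, 90, 120, 180, 144, 108, 72, 36], [0, 0, 0, 0, 0, 0, 0, 0, 48, 72, 96, 144, 120, 90, 60, 30], [0, 0, 0, 0, 0, 0, 0, 0, 36, 54, 72, 108, 90, 72, 48, 24], [0, 0, 0, 0, 0, 0, 0, 0, 24, 36, 48, 72, 60, 48, 36, 18], [0, 0, 0, 0, 0, 0, 0, 0, 12, 18, 24, 36, 30, 24, 18, 12]]"

definition F_L1 :: "int list list" where
  "F_L1 = [[-130, 146, -15, -48, 29, 18, -47, -101, 72, 109, 145, 220, 186, 154, 120, 72], [0, 0, 19, 0, 0, 0, 0, 1, 14, 25, 13, 34, 16, 0, 0, 0], [0, 1, 11, 0, 0, 0, 0, 0, 8, 14, 7, 19, 9, 0, 0, 0], [0, 0, 6, 1, 0, 0, 0, 0, 3, 6, 2, 8, 4, 0, 0, 0], [0, 0, -13, 0, 0, 1, 0, 0, -9, -17, -8, -22, -10, 0, 0, 0], [0, 0, -3, 0, 1, 0, 0, 0, -2, -3, -1, -4, -2, 0, 0, 0], [1, 0, -12, 0, 0, 0, 0, 0, -8, -15, -7, -20, -9, 0, 0, 0], [0, 0, 1, 0, 0, 0, 0, 0, 2, 3, 3, 5, 3, 1, 0, 0], [0, 0, -2, 0, 0, 0, 0, 0, -2, -4, -3, -6, -3, 0, 1, 0], [0, 0, -2, 0, 0, 0, 0, 0,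 -2, -2, -1, -3, -1, 0, 0, 1]]"

definition Fm_L1 :: "int list list" where
  "Fm_L1 = [[146, -130, 18, -81, 40, 155, -112, -220, -1, -2, -2, 0, -2, 2, 14, 24], [0, 0, 38, -19, 0, -1, 0, 2, 15, 16, -22, 14, -2, -16, 0, 0], [1, 0, 22, -11, 0, 0, 0, 0, 9, 9, -13, 8, -1, -9, 0, 0], [0, 0, 11, -4, 0, 0, 0, 0, 4, 4, -7, 4, 0, -4, 0, 0], [0, 0, -26, 13, -1, 2, -1, -1, -10, -12, 15, -9, 2, 10, 0, 0], [0, 0, -6, 3, 2, -1, 0, 0, -3, -2, 4, -2, 0, 2, 0, 0], [0, 1, -24, 12, 0, 0, 0, 0, -9, -10, 14, -9, 2, 9, 0, 0], [0, 0, 2, -1, 0, 0, 0, 0, 1, 1, -1, 1, 0, -1, -1, 0], [0, 0, -4, 2, 0, 0, 0, 0, -1, -2, 2, -2, 0, 2, 2, -1], [0, 0, -4, 2, 0, 0, 0, 0, -3, -1, 3, -2, 1, 1, -1, 2]]"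

definition N_L1 :: "int list list" where
  "N_L1 = [[0, -5, 1, 0, 0, -4, 0, 0, 0, -10, -7, -13, -9, -8, -6, 0], [0, 1, 0, 0, 1, 2, 0, 1, 0, 1, 0, 0, 0, 1, 0, 0], [1, 2, 0, 0, 0, 2, 0, 1, 0, 5, 4, 7, 5, 5, 3, 0], [0, -6, 0, 0, 0, -4, 1, 0, 0, -10, -8, -13, -9, -9, -6, 0], [0, -2, 0, 1, 0, -1, 0, 0, 0, -4, -4, -7, -6, -5, -3, 0], [0, -1, 0, 0, 0, -1, 0, 0, 1, -1, 0, 0, 0, 0, 0, 1]]"

definition phi_L1 :: "int list list" where
  "phi_L1 = [[0, 0, 1, 0, 0, 0, 0, 0, 0, 0, 0, 0, 0, 0, 0, 0], [0, 0, 0, 0, 1, 0, 0, 0, 0, 0, 0, 0, 0, 0, 0, 0], [1, 0, 0, 0, 0, 0, 0, 0, 0, 0, 0, 0, 0, 0, 0, 0], [0, 0, 0, 0, 0, 0, 1, 0, 0, 0, 0, 0, 0, 0, 0, 0], [0, 0, 0, 1, 0, 0, 0, 0, 0, 0, 0, 0, 0, 0, 0, 0], [0, 0, 0, 0, 0, 0, 0, 0, 0, 0, 0, 0, 0, 0, 0, 1]]"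

definition R_L1 :: "int list list" where
  "R_L1 = [[0, 0, 0, 0, 0, 0, 0, 0, 0, 0], [-11, -876, 1418, -246, 668, 507, -1336, 2070, 1602, 980], [0, 0, 0, 0, 0, 0, 0, 0, 0, 0], [0, 0, 0, 0, 0, 0, 0, 0, 0, 0], [0, 0, 0, 0, 0, 0, 0, 0, 0, 0], [-8, -620, 980, -196, 520, 326, -1040, 1608, 1242, 764], [0, 0, 0, 0, 0, 0, 0, 0, 0, 0], [0, 47, -94, 0, 0, -47, 0, 0, 0, 0], [0, 0, 0, 0, 0, 0, 0, 188, 94, 0], [-19, -1496, 2304, -348, 1188, 927, -2470, 4148, 3126, 1838], [-16, -1240, 1960, -298, 1040, 840, -2080, 3592, 2672, 1528], [-26, -2015, 3138, -402, 1690, 1365, -3380, 5696, 4248, 2436], [-18, -1395, 2158, -206, 1170, 945, -2340, 4182, 3100, 1766], [-17, -1341, 2012, -252, 1058, 822, -2210, 3746, 2792, 1600], [-12, -930, 1470, -200, 780, 630, -1560, 2600, 2004, 1146], [0, 0, 0, 0, 0, 0, 0, 0, 0, 0]]"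

definition NG_L1 :: "int list list" where
  "NG_L1 = [[116, -16, -58, 120, 38, 28], [-16, 8, 10, -20, -4, -4], [-58, 10, 32, -64, -22, -14], [120, -20, -64, 132, 42, 30], [38, -4, -22, 42, 20, 10], [28, -4, -14, 30, 10, 8]]"

definition FG_L1 :: "int list list" where
  "FG_L1 = [[-144, 0, 0, 0, 0, 0, 0, 0, 0, -2], [0, 1492, 856, 410, -1014, -222, -924, 98, -182, -156], [0, 856, 492, 236, -582, -128, -530, 56, -104, -90], [0, 410, 236, 116, -279, -62, -255, 26, -49, -43], [0, -1014, -582, -279, 692, 150, 629, -66, 123, 106], [0, -222, -128, -62, 150, 36, 138, -14, 26, 24], [0, -924, -530, -255, 629, 138, 574, -60, 112, 97], [0, 98, 56, 26, -66, -14, -60, 8, -14, -10], [0, -182, -104, -49, 123, 26, 112, -14, 26, 17], [-2, -156, -90, -43, 106, 24, 97, -10, 17, 20]]"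

lemma M_L1_eq: "U_lat \<oplus>\<^sub>L A2_lat \<oplus>\<^sub>L D4_lat \<oplus>\<^sub>L E8_lat = M_L1"
  by code_simp

lemma rk_L1: "rk M_L1 = 16"
  by (simp add: rk_def M_L1_def)

lemma iso1_L1: "\<forall>i<16. \<forall>l<16. (\<Sum>j<16. gram M_L1 i j * gram g_L1 j l) = gram A_L1 i l"
  unfolding all_lt_code sum_lt_code by code_simp

lemma iso2_L1: "\<forall>k<16. \<forall>l<16. (\<Sum>i<16. gram g_L1 i k * gram A_L1 i l) = gram M_L1 k l"
  unfolding all_lt_code sum_lt_code by code_simp

lemma inv_L1: "\<forall>i<16. \<forall>k<16. (\<Sum>j<16. gram g_L1 i j * gram g_L1 j k) = (if i = k then 1 else 0)"
  unfolding all_lt_code sum_lt_code by code_simp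

lemma z3L_L1: "\<forall>i<16. \<forall>a<16. gram g_L1 i a + (if i = a then 1 else 0) = (\<Sum>b<16. gram M_L1 a b * gram lam_L1 i b) + 3 * gram mu_L1 i a"
  unfolding all_lt_code sum_lt_code by code_simp

lemma z3C_L1: "\<forall>i<16. \<forall>a<16. (\<Sum>b<16. gram M_L1 a b * gram C_L1 i b) = (if i = a then 6 else 0)"
  unfolding all_lt_code sum_lt_code by code_simp

lemma fix_L1: "\<forall>k\<le>9. \<forall>i<16. (\<Sum>j<16. gram g_L1 i j * gram F_L1 k j) = gram F_L1 k i"
  unfolding all_le_code all_lt_code sum_lt_code by code_simp

lemma Fm_L1: "\<forall>k\<le>9. \<forall>a<16. (\<Sum>b<16. gram M_L1 a b * gram F_L1 k b) = gram Fm_L1 k a"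
  unfolding all_le_code all_lt_code sum_lt_code by code_simp

lemma cert_L1: "\<forall>i<16. \<forall>j<16. (94::int) * (if i = j then 1 else 0) = 94 * (\<Sum>s<6. gram N_L1 s i * gram phi_L1 s j) + (\<Sum>k\<le>9. gram R_L1 i k * gram Fm_L1 k j)"
  unfolding all_lt_code sum_lt_code sum_le_code by code_simp

lemma NG_L1: "\<forall>s<6. \<forall>t<6. (\<Sum>a<16. gram N_L1 s a * (\<Sum>b<16. gram M_L1 a b * gram N_L1 t b)) = gram NG_L1 s t"
  unfolding all_lt_code sum_lt_code by code_simp

lemma NGp_L1: "(\<forall>s<6. 4 dvd gram NG_L1 s s) \<and> (\<forall>s<6. \<forall>t<6. 2 dvd gram NG_L1 s t) \<and> (\<forall>s<6. \<forall>t<6. gram NG_L1 s t = gram NG_L1 t s)"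
  unfolding all_lt_code by code_simp

lemma FG_L1: "\<forall>k\<le>9. \<forall>l\<le>9. (\<Sum>a<16. gram F_L1 k a * gram Fm_L1 l a) = gram FG_L1 k l"
  unfolding all_le_code sum_lt_code by code_simp

lemma FGp_L1: "gram FG_L1 0 0 \<le> -1 \<and> (\<forall>k\<le>9. \<forall>l\<le>9. \<bar>gram FG_L1 k l\<bar> \<le> 1492)"
  unfolding all_le_code by code_simp

lemma achiral_L1: "achiral (U_lat \<oplus>\<^sub>L A2_lat \<oplus>\<^sub>L D4_lat \<oplus>\<^sub>L E8_lat)"
  unfolding M_L1_eq
proof (rule achiral_crit[where n=16 and g="gram g_L1" and fs="\<lambda>k. fv 16 (gram F_L1 k)" and m=9
      and \<epsilon>="1 / (of_nat ((9+1)*(9+1)) * of_int 1492 + 1)"])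
  show "rk M_L1 = 16" by (rule rk_L1)
  show "\<And>x y. x \<in> Vsp 16 \<Longrightarrow> y \<in> Vsp 16 \<Longrightarrow> bil M_L1 (act 16 (gram g_L1) x) (act 16 (gram g_L1) y) = bil M_L1 x y"
    by (rule iso_check[OF rk_L1 iso1_L1 iso2_L1])
  show "\<And>x. x \<in> Vsp 16 \<Longrightarrow> act 16 (gram g_L1) (act 16 (gram g_L1) x) = x"
    by (rule inv_check[OF inv_L1])
  show "z3_reversing M_L1 (gram g_L1)"
    by (rule z3_check[OF rk_L1 z3L_L1 z3C_L1])
  show "\<And>k. k \<le> 9 \<Longrightarrow> fv 16 (gram F_L1 k) \<in> Vsp 16"
    by (rule fv_Vsp)
  show "\<And>k. k \<le> 9 \<Longrightarrow> act 16 (gram g_L1) (fv 16 (gram F_L1 k)) = fv 16 (gram F_L1 k)"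
    using fix_L1 by (intro fix_check) auto
  show "\<And>v. v \<in> lat 16 \<Longrightarrow> \<forall>k\<le>9. bil M_L1 v (fv 16 (gram F_L1 k)) = 0 \<Longrightarrow> bil M_L1 v v / 4 \<in> \<int>"
    using NGp_L1 by (intro noroot_check[OF rk_L1 Fm_L1 cert_L1 NG_L1]) auto
  show "0 < 1 / (of_nat ((9+1)*(9+1)) * of_int 1492 + 1 :: real)"
    by simp
  show "\<And>t. 0 < t \<Longrightarrow> t < 1 / (of_nat ((9+1)*(9+1)) * of_int 1492 + 1) \<Longrightarrow>
      bil M_L1 (curve (\<lambda>k. fv 16 (gram F_L1 k)) 9 t) (curve (\<lambda>k. fv 16 (gram F_L1 k)) 9 t) < 0"
    using FGp_L1 by (intro neg_check[OF rk_L1 Fm_L1 FG_L1]) auto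
qed

definition M_L2 :: "int list list" where
  "M_L2 = [[0, 1, 0, 0, 0, 0, 0, 0, 0, 0, 0, 0], [1, 0, 0, 0, 0, 0, 0, 0, 0, 0, 0, 0], [0, 0, 2, -1, 0, 0, 0, 0, 0, 0, 0, 0], [0, 0, -1, 2, 0, 0, 0, 0, 0, 0, 0, 0], [0, 0, 0, 0, 2, -1, 0, 0, 0, 0, 0, 0], [0, 0, 0, 0, -1, 2, -1, -1, 0, 0, 0, 0], [0, 0, 0, 0, 0, -1, 2, 0, 0, 0, 0, 0], [0, 0, 0, 0, 0, -1, 0, 2, 0, 0, 0, 0], [0, 0, 0, 0, 0, 0, 0, 0, 2, -1, 0, 0], [0, 0, 0, 0, 0, 0, 0, 0, -1, 2, -1, -1], [0, 0, 0, 0, 0, 0, 0, 0, 0, -1, 2, 0], [0, 0, 0, 0, 0, 0, 0, 0, 0, -1, 0, 2]]"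

definition g_L2 :: "int list list" where
  "g_L2 = [[37, -12, -12, 0, -6, 24, -6, -12, 18, 6, -12, 0], [-108, 37, 36, 0, 18, -72, 18, 36, -54, -18, 36, 0], [24, -8, -7, 0, -4, 16, -4, -8, 12, 4, -8, 0], [12, -4, -4, 1, -2, 8, -2, -4, 6, 2, -4, 0], [-27, 9, 9, 0, 5, -18, 5, 9, -14, -4, 9, 0], [-72, 24, 24, 0, 12, -47, 12, 24, -36, -12, 24, 0], [-27, 9, 9, 0, 5, -18, 5, 9, -13, -5, 9, 0], [-18, 6, 6, 0, 3, -12, 3, 7, -9, -3, 6, 0], [-54, 18, 18, 0, 9, -36, 9, 18, -26, -9, 18, 0], [-54, 18, 18, 0, 10, -36, 8, 18, -26, -9, 18, 0], [-9, 3, 3, 0, 2, -6, 1, 3, -4, -2, 4, 0], [-27, 9, 9, 0, 5, -18, 4, 9, -13, -5, 9, 1]]"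

definition A_L2 :: "int list list" where
  "A_L2 = [[-108, 37, 36, 0, 18, -72, 18, 36, -54, -18, 36, 0], [37, -12, -12, 0, -6, 24, -6, -12, 18, 6, -12, 0], [36, -12, -10, -1, -6, 24, -6, -12, 18, 6, -12, 0], [0, 0, -1, 2, 0, 0, 0, 0, 0, 0, 0, 0], [18, -6, -6, 0, -2, 11, -2, -6, 8, 4, -6, 0], [-72, 24, 24, 0, 11, -46, 11, 23, -36, -12, 24, 0], [18, -6, -6, 0, -2, 11, -2, -6, 10, 2, -6, 0], [36, -12, -12, 0, -6, 23, -6, -10, 18, 6, -12, 0], [-54, 18, 18, 0, 8, -36, 10, 18, -26, -9, 18, 0], [-18, 6, 6, 0, 4, -12, 2, 6, -9, -2, 5, -1], [36, -12, -12, 0, -6, 24, -6, -12, 18, 5, -10, 0], [0, 0, 0, 0, 0, 0, 0, 0, 0, -1, 0, 2]]"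

definition lam_L2 :: "int list list" where
  "lam_L2 = [[0, 2, 0, 0, 0, 0, 0, 0, 0, 0, 0, 0], [2, 0, 0, 0, 0, 0, 0, 0, 0, 0, 0, 0], [1, 0, 0, 0, 0, 1, 0, 1, 0, 0, 2, 0], [2, 0, 1, 0, 0, 2, 0, 2, 0, 0, 1, 0], [0, 0, 0, 0, 1, 2, 2, 1, 0, 2, 1, 1], [0, 0, 0, 0, 2, 1, 2, 2, 0, 0, 0, 0], [0, 0, 0, 0, 2, 2, 1, 1, 0, 1, 2, 2], [0, 0, 0, 0, 1, 2, 1, 2, 0, 0, 0, 0], [0, 0, 0, 0, 0, 0, 0, 0, 2, 2, 1, 1], [0, 0, 0, 0, 2, 0, 1, 0, 2, 0, 0, 0], [0, 0, 0, 0, 1, 0, 2, 0, 1, 0, 1, 0], [0, 0, 0, 0, 1, 0, 2, 0, 1, 0, 0, 1]]"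

definition mu_L2 :: "int list list" where
  "mu_L2 = [[12, -4, -4, 0, -2, 8, -2, -4, 6, 2, -4, 0], [-36, 12, 12, 0, 6, -24, 6, 12, -18, -6, 12, 0], [8, -3, -2, 0, -1, 5, -1, -3, 4, 2, -4, 0], [4, -2, -2, 1, 0, 2, 0, -2, 2, 1, -2, 0], [-9, 3, 3, 0, 2, -6, 1, 3, -4, -2, 3, 0], [-24, 8, 8, 0, 3, -14, 3, 7, -12, -4, 8, 0], [-9, 3, 3, 0, 1, -6, 2, 3, -4, -1, 2, -1], [-6, 2, 2, 0, 1, -4, 1, 2, -3, -1, 2, 0], [-18, 6, 6, 0, 3, -12, 3, 6, -9, -3, 6, 0], [-18, 6, 6, 0, 2, -11, 2, 6, -10, -2, 6, 0], [-3, 1, 1, 0, 0, -1, -1, 1, -2, 0, 1, 0], [-9, 3, 3, 0, 1, -5, 0, 3, -5, -1, 3, 0]]"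

definition C_L2 :: "int list list" where
  "C_L2 = [[0, 6, 0, 0, 0, 0, 0, 0, 0, 0, 0, 0], [6, 0, 0, 0, 0, 0, 0, 0, 0, 0, 0, 0], [0, 0, 4, 2, 0, 0, 0, 0, 0, 0, 0, 0], [0, 0, 2, 4, 0, 0, 0, 0, 0, 0, 0, 0], [0, 0, 0, 0, 6, 6, 3, 3, 0, 0, 0, 0], [0, 0, 0, 0, 6, 12, 6, 6, 0, 0, 0, 0], [0, 0, 0, 0, 3, 6, 6, 3, 0, 0, 0, 0], [0, 0, 0, 0, 3, 6, 3, 6, 0, 0, 0, 0], [0, 0, 0, 0, 0, 0, 0, 0, 6, 6, 3, 3], [0, 0, 0, 0, 0, 0, 0, 0, 6, 12, 6, 6], [0, 0, 0, 0, 0, 0, 0, 0, 3, 6, 6, 3], [0, 0, 0, 0, 0, 0, 0, 0, 3, 6, 3, 6]]"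

definition F_L2 :: "int list list" where
  "F_L2 = [[-18, 54, -12, -6, 13, 36, 14, 9, 25, 24, 3, 10], [0, 0, 0, 1, 0, 0, 0, 0, 0, 0, 0, 0], [1, 3, 0, 0, 0, 0, 0, 0, 0, 0, 0, 0], [0, 2, 0, 0, 0, 1, 0, 0, 0, 0, 0, 0], [0, -1, 0, 0, 1, 0, 1, 0, 0, 0, 0, 0], [0, -1, 0, 0, 0, 0, 0, 1, 0, 0, 0, 0], [0, 2, 0, 0, -1, 0, 0, 0, 1, 0, 0, 0], [0, 0, 0, 0, 1, 0, 0, 0, 0, 1, 0, 0], [0, -1, 0, 0, 0, 0, 0, 0, 0, 0, 1, 0], [0, 0, 0, 0, 0, 0, 0, 0, 0, 0, 0, 1]]"

definition Fm_L2 :: "int list list" where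
  "Fm_L2 = [[54, -18, -18, 0, -10, 36, -8, -18, 26, 10, -18, -4], [0, 0, -1, 2, 0, 0, 0, 0, 0, 0, 0, 0], [3, 1, 0, 0, 0, 0, 0, 0, 0, 0, 0, 0], [2, 0, 0, 0, -1, 2, -1, -1, 0, 0, 0, 0], [-1, 0, 0, 0, 2, -2, 2, 0, 0, 0, 0, 0], [-1, 0, 0, 0, 0, -1, 0, 2, 0, 0, 0, 0], [2, 0, 0, 0, -2, 1, 0, 0, 2, -1, 0, 0], [0, 0, 0, 0, 2, -1, 0, 0, -1, 2, -1, -1], [-1, 0, 0, 0, 0, 0, 0, 0, 0, -1, 2, 0], [0, 0, 0, 0, 0, 0, 0, 0, 0, -1, 0, 2]]"

definition N_L2 :: "int list list" where
  "N_L2 = [[-6, 18, -4, -2, 9, 12, 0, 3, 9, 0, -3, 0], [0, 0, 0, 0, -1, 0, 1, 0, 0, 2, 1, 1]]"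

definition phi_L2 :: "int list list" where
  "phi_L2 = [[-78, 26, 26, 0, 13, -52, 13, 24, -36, -12, 24, 0], [0, 0, 0, 0, 0, 0, 0, 0, 0, 0, 0, 1]]"

definition R_L2 :: "int list list" where
  "R_L2 = [[-104, 0, 0, -144, -20, -144, 8, -96, -120, -256], [312, 0, 12, 432, 60, 432, -24, 288, 360, 768], [-70, 0, -12, -72, -4, -90, 22, -48, -78, -164], [-35, 6, -6, -36, -2, -45, 11, -24, -39, -82], [156, 0, 0, 228, 36, 222, -6, 156, 186, 396], [208, 0, 0, 312, 52, 300, -16, 192, 240, 512], [0, 0, 0, 12, 12, 6, -6, -12, -6, -12], [52, 0, 0, 84, 16, 84, -4, 48, 60, 128], [156, 0, 0, 216, 30, 216, 0, 156, 186, 390], [0, 0, 0, 0, 0, 0, 0, 0, 0, -12], [-52, 0, 0, -72, -10, -72, 4, -48, -54, -134], [0, 0, 0, 0, 0, 0, 0, 0, 0, 0]]"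

definition NG_L2 :: "int list list" where
  "NG_L2 = [[168, -36], [-36, 8]]"

definition FG_L2 :: "int list list" where
  "FG_L2 = [[-40, 0, 0, 0, 0, 0, 0, 0, 0, -4], [0, 2, 0, 0, 0, 0, 0, 0, 0, 0], [0, 0, 6, 2, -1, -1, 2, 0, -1, 0], [0, 0, 2, 2, -2, -1, 1, -1, 0, 0], [0, 0, -1, -2, 4, 0, -2, 2, 0, 0], [0, 0, -1, -1, 0, 2, 0, 0, 0, 0], [0, 0, 2, 1, -2, 0, 4, -3, 0, 0], [0, 0, 0, -1, 2, 0, -3, 4, -1, -1], [0, 0, -1, 0, 0, 0, 0, -1, 2, 0], [-4, 0, 0, 0, 0, 0, 0, -1, 0, 2]]"

lemma M_L2_eq: "U_lat \<oplus>\<^sub>L A2_lat \<oplus>\<^sub>L D4_lat \<oplus>\<^sub>L D4_lat = M_L2"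
  by code_simp

lemma rk_L2: "rk M_L2 = 12"
  by (simp add: rk_def M_L2_def)

lemma iso1_L2: "\<forall>i<12. \<forall>l<12. (\<Sum>j<12. gram M_L2 i j * gram g_L2 j l) = gram A_L2 i l"
  unfolding all_lt_code sum_lt_code by code_simp

lemma iso2_L2: "\<forall>k<12. \<forall>l<12. (\<Sum>i<12. gram g_L2 i k * gram A_L2 i l) = gram M_L2 k l"
  unfolding all_lt_code sum_lt_code by code_simp

lemma inv_L2: "\<forall>i<12. \<forall>k<12. (\<Sum>j<12. gram g_L2 i j * gram g_L2 j k) = (if i = k then 1 else 0)"
  unfolding all_lt_code sum_lt_code by code_simp

lemma z3L_L2: "\<forall>i<12. \<forall>a<12. gram g_L2 i a + (if i = a then 1 else 0) = (\<Sum>b<12. gram M_L2 a b * gram lam_L2 i b) + 3 * gram mu_L2 i a"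
  unfolding all_lt_code sum_lt_code by code_simp

lemma z3C_L2: "\<forall>i<12. \<forall>a<12. (\<Sum>b<12. gram M_L2 a b * gram C_L2 i b) = (if i = a then 6 else 0)"
  unfolding all_lt_code sum_lt_code by code_simp

lemma fix_L2: "\<forall>k\<le>9. \<forall>i<12. (\<Sum>j<12. gram g_L2 i j * gram F_L2 k j) = gram F_L2 k i"
  unfolding all_le_code all_lt_code sum_lt_code by code_simp

lemma Fm_L2: "\<forall>k\<le>9. \<forall>a<12. (\<Sum>b<12. gram M_L2 a b * gram F_L2 k b) = gram Fm_L2 k a"
  unfolding all_le_code all_lt_code sum_lt_code by code_simp

lemma cert_L2: "\<forall>i<12. \<forall>j<12. (12::int) * (if i = j then 1 else 0) = 12 * (\<Sum>s<2. gram N_L2 s i * gram phi_L2 s j) + (\<Sum>k\<le>9. gram R_L2 i k * gram Fm_L2 k j)"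
  unfolding all_lt_code sum_lt_code sum_le_code by code_simp

lemma NG_L2: "\<forall>s<2. \<forall>t<2. (\<Sum>a<12. gram N_L2 s a * (\<Sum>b<12. gram M_L2 a b * gram N_L2 t b)) = gram NG_L2 s t"
  unfolding all_lt_code sum_lt_code by code_simp

lemma NGp_L2: "(\<forall>s<2. 4 dvd gram NG_L2 s s) \<and> (\<forall>s<2. \<forall>t<2. 2 dvd gram NG_L2 s t) \<and> (\<forall>s<2. \<forall>t<2. gram NG_L2 s t = gram NG_L2 t s)"
  unfolding all_lt_code by code_simp

lemma FG_L2: "\<forall>k\<le>9. \<forall>l\<le>9. (\<Sum>a<12. gram F_L2 k a * gram Fm_L2 l a) = gram FG_L2 k l"
  unfolding all_le_code sum_lt_code by code_simp

lemma FGp_L2: "gram FG_L2 0 0 \<le> -1 \<and> (\<forall>k\<le>9. \<forall>l\<le>9. \<bar>gram FG_L2 k l\<bar> \<le> 40)"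
  unfolding all_le_code by code_simp

lemma achiral_L2: "achiral (U_lat \<oplus>\<^sub>L A2_lat \<oplus>\<^sub>L D4_lat \<oplus>\<^sub>L D4_lat)"
  unfolding M_L2_eq
proof (rule achiral_crit[where n=12 and g="gram g_L2" and fs="\<lambda>k. fv 12 (gram F_L2 k)" and m=9
      and \<epsilon>="1 / (of_nat ((9+1)*(9+1)) * of_int 40 + 1)"])
  show "rk M_L2 = 12" by (rule rk_L2)
  show "\<And>x y. x \<in> Vsp 12 \<Longrightarrow> y \<in> Vsp 12 \<Longrightarrow> bil M_L2 (act 12 (gram g_L2) x) (act 12 (gram g_L2) y) = bil M_L2 x y"
    by (rule iso_check[OF rk_L2 iso1_L2 iso2_L2])
  show "\<And>x. x \<in> Vsp 12 \<Longrightarrow> act 12 (gram g_L2) (act 12 (gram g_L2) x) = x"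
    by (rule inv_check[OF inv_L2])
  show "z3_reversing M_L2 (gram g_L2)"
    by (rule z3_check[OF rk_L2 z3L_L2 z3C_L2])
  show "\<And>k. k \<le> 9 \<Longrightarrow> fv 12 (gram F_L2 k) \<in> Vsp 12"
    by (rule fv_Vsp)
  show "\<And>k. k \<le> 9 \<Longrightarrow> act 12 (gram g_L2) (fv 12 (gram F_L2 k)) = fv 12 (gram F_L2 k)"
    using fix_L2 by (intro fix_check) auto
  show "\<And>v. v \<in> lat 12 \<Longrightarrow> \<forall>k\<le>9. bil M_L2 v (fv 12 (gram F_L2 k)) = 0 \<Longrightarrow> bil M_L2 v v / 4 \<in> \<int>"
    using NGp_L2 by (intro noroot_check[OF rk_L2 Fm_L2 cert_L2 NG_L2]) auto
  show "0 < 1 / (of_nat ((9+1)*(9+1)) * of_int 40 + 1 :: real)"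
    by simp
  show "\<And>t. 0 < t \<Longrightarrow> t < 1 / (of_nat ((9+1)*(9+1)) * of_int 40 + 1) \<Longrightarrow>
      bil M_L2 (curve (\<lambda>k. fv 12 (gram F_L2 k)) 9 t) (curve (\<lambda>k. fv 12 (gram F_L2 k)) 9 t) < 0"
    using FGp_L2 by (intro neg_check[OF rk_L2 Fm_L2 FG_L2]) auto
qed

definition M_L3 :: "int list list" where
  "M_L3 = [[0, 1, 0, 0, 0, 0, 0, 0], [1, 0, 0, 0, 0, 0, 0, 0], [0, 0, 4, 0, -2, 0, 0, 0], [0, 0, 0, 4, 0, -2, 0, 0], [0, 0, -2, 0, 4, -2, 0, 0], [0, 0, 0, -2, -2, 4, -2, 0], [0, 0, 0, 0, 0, -2, 4, -2], [0, 0, 0, 0, 0, 0, -2, 4]]"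

definition g_L3 :: "int list list" where
  "g_L3 = [[1, 0, 0, 0, 0, 0, 0, 0], [0, 1, 0, 0, 0, 0, 0, 0], [0, 0, 0, 0, 0, 0, 0, 1], [0, 0, 0, 1, 0, 0, 0, 0], [0, 0, 0, 0, 0, 0, 1, 0], [0, 0, 0, 0, 0, 1, 0, 0], [0, 0, 0, 0, 1, 0, 0, 0], [0, 0, 1, 0, 0, 0, 0, 0]]"

definition A_L3 :: "int list list" where
  "A_L3 = [[0, 1, 0, 0, 0, 0, 0, 0], [1, 0, 0, 0, 0, 0, 0, 0], [0, 0, 0, 0, 0, 0, -2, 4], [0, 0, 0, 4, 0, -2, 0, 0], [0, 0, 0, 0, 0, -2, 4, -2], [0, 0, 0, -2, -2, 4, -2, 0], [0, 0, -2, 0, 4, -2, 0, 0], [0, 0, 4, 0, -2, 0, 0, 0]]"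

definition lam_L3 :: "int list list" where
  "lam_L3 = [[0, 2, 0, 0, 0, 0, 0, 0], [2, 0, 0, 0, 0, 0, 0, 0], [0, 0, 2, 1, 2, 2, 1, 0], [0, 0, 2, 2, 1, 0, 0, 0], [0, 0, 0, 2, 0, 1, 0, 0], [0, 0, 1, 0, 2, 0, 0, 0], [0, 0, 0, 2, 0, 1, 0, 0], [0, 0, 2, 1, 2, 2, 1, 0]]"

definition mu_L3 :: "int list list" where
  "mu_L3 = [[0, 0, 0, 0, 0, 0, 0, 0], [0, 0, 0, 0, 0, 0, 0, 0], [0, 0, -1, 0, 0, 0, 0, 1], [0, 0, -2, -2, 0, 2, 0, 0], [0, 0, 0, -2, 1, 0, 1, 0], [0, 0, 0, 0, -2, 2, 0, 0], [0, 0, 0, -2, 1, 0, 1, 0], [0, 0, -1, 0, 0, 0, 0, 1]]"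

definition C_L3 :: "int list list" where
  "C_L3 = [[0, 6, 0, 0, 0, 0, 0, 0], [6, 0, 0, 0, 0, 0, 0, 0], [0, 0, 4, 3, 5, 6, 4, 2], [0, 0, 3, 6, 6, 9, 6, 3], [0, 0, 5, 6, 10, 12, 8, 4], [0, 0, 6, 9, 12, 18, 12, 6], [0, 0, 4, 6, 8, 12, 10, 5], [0, 0, 2, 3, 4, 6, 5, 4]]"

definition F_L3 :: "int list list" where
  "F_L3 = [[1, -1, 0, 0, 0, 0, 0, 0], [0, 0, 0, 1, 0, 0, 0, 0], [0, 1, 0, 0, 0, 0, 0, 0], [0, 0, 0, 0, 0, 1, 0, 0], [0, 0, 0, 0, 1, 0, 1, 0], [0, 0, 1, 0, 0, 0, 0, 1]]"

definition Fm_L3 :: "int list list" where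
  "Fm_L3 = [[-1, 1, 0, 0, 0, 0, 0, 0], [0, 0, 0, 4, 0, -2, 0, 0], [1, 0, 0, 0, 0, 0, 0, 0], [0, 0, 0, -2, -2, 4, -2, 0], [0, 0, -2, 0, 4, -4, 4, -2], [0, 0, 4, 0, -2, 0, -2, 4]]"

definition N_L3 :: "int list list" where
  "N_L3 = [[0, 0, 0, 0, -1, 0, 1, 0], [0, 0, -1, 0, 0, 0, 0, 1]]"

definition phi_L3 :: "int list list" where
  "phi_L3 = [[0, 0, 0, 0, 0, 0, 1, 0], [0, 0, 0, 0, 0, 0, 0, 1]]"

definition R_L3 :: "int list list" where
  "R_L3 = [[0, 0, 2, 0, 0, 0], [2, 0, 2, 0, 0, 0], [0, 2, 0, 4, 3, 2], [0, 2, 0, 3, 2, 1], [0, 4, 0, 8, 6, 3], [0, 3, 0, 6, 4, 2], [0, 0, 0, 0, 0, 0], [0, 0, 0, 0, 0, 0]]"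

definition NG_L3 :: "int list list" where
  "NG_L3 = [[8, -4], [-4, 8]]"

definition FG_L3 :: "int list list" where
  "FG_L3 = [[-2, 0, 1, 0, 0, 0], [0, 4, 0, -2, 0, 0], [1, 0, 0, 0, 0, 0], [0, -2, 0, 4, -4, 0], [0, 0, 0, -4, 8, -4], [0, 0, 0, 0, -4, 8]]"

lemma M_L3_eq: "U_lat \<oplus>\<^sub>L scaleL 2 E6_lat = M_L3"
  by code_simp

lemma rk_L3: "rk M_L3 = 8"
  by (simp add: rk_def M_L3_def)

lemma iso1_L3: "\<forall>i<8. \<forall>l<8. (\<Sum>j<8. gram M_L3 i j * gram g_L3 j l) = gram A_L3 i l"
  unfolding all_lt_code sum_lt_code by code_simp

lemma iso2_L3: "\<forall>k<8. \<forall>l<8. (\<Sum>i<8. gram g_L3 i k * gram A_L3 i l) = gram M_L3 k l"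
  unfolding all_lt_code sum_lt_code by code_simp

lemma inv_L3: "\<forall>i<8. \<forall>k<8. (\<Sum>j<8. gram g_L3 i j * gram g_L3 j k) = (if i = k then 1 else 0)"
  unfolding all_lt_code sum_lt_code by code_simp

lemma z3L_L3: "\<forall>i<8. \<forall>a<8. gram g_L3 i a + (if i = a then 1 else 0) = (\<Sum>b<8. gram M_L3 a b * gram lam_L3 i b) + 3 * gram mu_L3 i a"
  unfolding all_lt_code sum_lt_code by code_simp

lemma z3C_L3: "\<forall>i<8. \<forall>a<8. (\<Sum>b<8. gram M_L3 a b * gram C_L3 i b) = (if i = a then 6 else 0)"
  unfolding all_lt_code sum_lt_code by code_simp

lemma fix_L3: "\<forall>k\<le>5. \<forall>i<8. (\<Sum>j<8. gram g_L3 i j * gram F_L3 k j) = gram F_L3 k i"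
  unfolding all_le_code all_lt_code sum_lt_code by code_simp

lemma Fm_L3: "\<forall>k\<le>5. \<forall>a<8. (\<Sum>b<8. gram M_L3 a b * gram F_L3 k b) = gram Fm_L3 k a"
  unfolding all_le_code all_lt_code sum_lt_code by code_simp

lemma cert_L3: "\<forall>i<8. \<forall>j<8. (2::int) * (if i = j then 1 else 0) = 2 * (\<Sum>s<2. gram N_L3 s i * gram phi_L3 s j) + (\<Sum>k\<le>5. gram R_L3 i k * gram Fm_L3 k j)"
  unfolding all_lt_code sum_lt_code sum_le_code by code_simp

lemma NG_L3: "\<forall>s<2. \<forall>t<2. (\<Sum>a<8. gram N_L3 s a * (\<Sum>b<8. gram M_L3 a b * gram N_L3 t b)) = gram NG_L3 s t"
  unfolding all_lt_code sum_lt_code by code_simp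

lemma NGp_L3: "(\<forall>s<2. 4 dvd gram NG_L3 s s) \<and> (\<forall>s<2. \<forall>t<2. 2 dvd gram NG_L3 s t) \<and> (\<forall>s<2. \<forall>t<2. gram NG_L3 s t = gram NG_L3 t s)"
  unfolding all_lt_code by code_simp

lemma FG_L3: "\<forall>k\<le>5. \<forall>l\<le>5. (\<Sum>a<8. gram F_L3 k a * gram Fm_L3 l a) = gram FG_L3 k l"
  unfolding all_le_code sum_lt_code by code_simp

lemma FGp_L3: "gram FG_L3 0 0 \<le> -1 \<and> (\<forall>k\<le>5. \<forall>l\<le>5. \<bar>gram FG_L3 k l\<bar> \<le> 8)"
  unfolding all_le_code by code_simp

lemma achiral_L3: "achiral (U_lat \<oplus>\<^sub>L scaleL 2 E6_lat)"
  unfolding M_L3_eq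
proof (rule achiral_crit[where n=8 and g="gram g_L3" and fs="\<lambda>k. fv 8 (gram F_L3 k)" and m=5
      and \<epsilon>="1 / (of_nat ((5+1)*(5+1)) * of_int 8 + 1)"])
  show "rk M_L3 = 8" by (rule rk_L3)
  show "\<And>x y. x \<in> Vsp 8 \<Longrightarrow> y \<in> Vsp 8 \<Longrightarrow> bil M_L3 (act 8 (gram g_L3) x) (act 8 (gram g_L3) y) = bil M_L3 x y"
    by (rule iso_check[OF rk_L3 iso1_L3 iso2_L3])
  show "\<And>x. x \<in> Vsp 8 \<Longrightarrow> act 8 (gram g_L3) (act 8 (gram g_L3) x) = x"
    by (rule inv_check[OF inv_L3])
  show "z3_reversing M_L3 (gram g_L3)"
    by (rule z3_check[OF rk_L3 z3L_L3 z3C_L3])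
  show "\<And>k. k \<le> 5 \<Longrightarrow> fv 8 (gram F_L3 k) \<in> Vsp 8"
    by (rule fv_Vsp)
  show "\<And>k. k \<le> 5 \<Longrightarrow> act 8 (gram g_L3) (fv 8 (gram F_L3 k)) = fv 8 (gram F_L3 k)"
    using fix_L3 by (intro fix_check) auto
  show "\<And>v. v \<in> lat 8 \<Longrightarrow> \<forall>k\<le>5. bil M_L3 v (fv 8 (gram F_L3 k)) = 0 \<Longrightarrow> bil M_L3 v v / 4 \<in> \<int>"
    using NGp_L3 by (intro noroot_check[OF rk_L3 Fm_L3 cert_L3 NG_L3]) auto
  show "0 < 1 / (of_nat ((5+1)*(5+1)) * of_int 8 + 1 :: real)"
    by simp
  show "\<And>t. 0 < t \<Longrightarrow> t < 1 / (of_nat ((5+1)*(5+1)) * of_int 8 + 1) \<Longrightarrow>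
      bil M_L3 (curve (\<lambda>k. fv 8 (gram F_L3 k)) 5 t) (curve (\<lambda>k. fv 8 (gram F_L3 k)) 5 t) < 0"
    using FGp_L3 by (intro neg_check[OF rk_L3 Fm_L3 FG_L3]) auto
qed

theorem proposition3p7:
  shows "achiral (U_lat \<oplus>\<^sub>L A2_lat \<oplus>\<^sub>L D4_lat \<oplus>\<^sub>L E8_lat)
    \<and> achiral (U_lat \<oplus>\<^sub>L A2_lat \<oplus>\<^sub>L D4_lat \<oplus>\<^sub>L D4_lat)
    \<and> achiral (U_lat \<oplus>\<^sub>L scaleL 2 E6_lat)"
  using achiral_L1 achiral_L2 achiral_L3 by blast

end
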